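(* Consider $\dot y=A(t)y+B(t)(u+\Delta(y,t))$, $y\in\mathbb{R}^{\bar n}$, $u\in\mathbb{R}^{\bar m}$, with continuous, bounded, $T$-periodic $A,B$ and unknown bounded $\Delta$, and a continuous $T$-periodic $K(t)$ such that the origin of $\dot\chi=A^{cl}(t)\chi$, $A^{cl}=A+BK$, is exponentially stable, with state-transition matrix $\Psi_{A^{cl}}$. Let $(L(t),F)$ be a real $cT$-periodic Floquet--Lyapunov factorization of this closed-loop system for some positive integer $c$, i.e. $\Psi_{A^{cl}}(t,0)=L(t)e^{Ft}$ with $F$ real constant and $L$ real, nonsingular, $\mathcal{C}^1$, $L(t+cT)=L(t)$. Suppose $F$ has a real invariant subspace $\Lambda$ of codimension $\bar m$ ($F\Lambda\subseteq\Lambda$), and let $\hat S\in\mathbb{R}^{\bar m\times\bar n}$ be a full-rank left annihilator of $\Lambda$. If $S(t):=\hat S L^{-1}(t)$ satisfies $\operatorname{rank}[S(t)B(t)]=\bar m$ for all $t\in[0,cT)$, then forward invariance of $S(t)y(t)\equiv0$ for $t\ge t_0$ corresponds to the system experiencing the equivalent control $u_{eq}(t)=K(t)y(t)-\Delta(y(t),t)$ for all $t\ge t_0$.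
   Context: Equivalent control: the control obtained from requiring $\frac{d}{dt}(S(t)y(t))\equiv0$ along motions satisfying $S(t)y(t)=0$. *)

theory Defs
  imports "HOL-Analysis.Analysis"
begin

definition mpow :: "real^'n^'n \<Rightarrow> nat \<Rightarrow> real^'n^'n" where
  "mpow M k = ((\<lambda>X. X ** M) ^^ k) (mat 1)"

definition mexp :: "real^'n^'n \<Rightarrow> real^'n^'n" where
  "mexp M = (\<Sum>k. (1 / fact k) *\<^sub>R mpow M k)"

definition state_transition ::
  "(real \<Rightarrow> real^'n^'n) \<Rightarrow> (real \<Rightarrow> real \<Rightarrow> real^'n^'n) \<Rightarrow> bool" where
  "state_transition Acl Psi \<longleftrightarrow>
     (\<forall>s. Psi s s = mat 1 \<and>
          (\<forall>t. ((\<lambda>t. Psi t s) has_vector_derivative (Acl t ** Psi t s)) (at t)))"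

definition exp_stable :: "(real \<Rightarrow> real^'n^'n) \<Rightarrow> bool" where
  "exp_stable Acl \<longleftrightarrow>
     (\<exists>k>0. \<exists>\<gamma>>0. \<forall>(x::real \<Rightarrow> real^'n) t0.
        (\<forall>t\<ge>t0. (x has_vector_derivative (Acl t *v x t)) (at t within {t0..})) \<longrightarrow>
        (\<forall>t\<ge>t0. norm (x t) \<le> k * exp (- \<gamma> * (t - t0)) * norm (x t0)))"

end

theory Submission
  imports Defs
begin


lemma mm_add_r: "((A::real^'n^'m) + B) ** (C::real^'k^'n) = A ** C + B ** C"
  by (simp add: matrix_matrix_mult_def vec_eq_iff sum.distrib algebra_simps)

lemma mm_scale_l: "(r *\<^sub>R (A::real^'n^'m)) ** (C::real^'k^'n) = r *\<^sub>R (A ** C)"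
  by (simp add: matrix_matrix_mult_def vec_eq_iff sum_distrib_left algebra_simps)

lemma mm_scale_r: "(A::real^'n^'m) ** (r *\<^sub>R (C::real^'k^'n)) = r *\<^sub>R (A ** C)"
  by (simp add: matrix_matrix_mult_def vec_eq_iff sum_distrib_left algebra_simps)

lemma bb_mm: "bounded_bilinear ((**) :: real^'n^'m \<Rightarrow> real^'k^'n \<Rightarrow> real^'k^'m)"
proof -
  have "bilinear ((**) :: real^'n^'m \<Rightarrow> real^'k^'n \<Rightarrow> real^'k^'m)"
    unfolding bilinear_def
    by (auto intro!: linearI simp: matrix_add_ldistrib mm_add_r mm_scale_l mm_scale_r)
  then show ?thesis by (simp add: bilinear_conv_bounded_bilinear)
qed

lemma bb_mv: "bounded_bilinear ((*v) :: real^'n^'m \<Rightarrow> real^'n \<Rightarrow> real^'m)"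
proof -
  have "bilinear ((*v) :: real^'n^'m \<Rightarrow> real^'n \<Rightarrow> real^'m)"
    unfolding bilinear_def
    by (auto intro!: linearI simp: matrix_vector_right_distrib matrix_vector_mult_add_rdistrib
        matrix_vector_mult_scaleR scaleR_matrix_vector_assoc)
  then show ?thesis by (simp add: bilinear_conv_bounded_bilinear)
qed

lemma mat_deriv_entries:
  fixes f :: "real \<Rightarrow> real^'n^'m"
  assumes "\<And>i j. ((\<lambda>t. f t $ i $ j) has_real_derivative (D $ i $ j)) (at t within S)"
  shows "(f has_vector_derivative D) (at t within S)"
  unfolding has_vector_derivative_def
  apply (subst has_derivative_componentwise_within)
  using assms
  by (auto simp: Basis_vec_def inner_axis has_field_derivative_def mult_commute_abs cart_eq_inner_axis[symmetric])

lemma mat_differentiable_entries: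
  fixes f :: "real \<Rightarrow> real^'n^'m"
  assumes "\<And>i j. (\<lambda>t. f t $ i $ j) differentiable (at t within S)"
  shows "f differentiable (at t within S)"
  apply (subst differentiable_componentwise_within)
  using assms
  by (auto simp: Basis_vec_def inner_axis cart_eq_inner_axis[symmetric])

lemma bl_entry: "bounded_linear (\<lambda>M::real^'n^'m. M $ i $ j)"
  using bounded_linear_compose[OF bounded_linear_vec_nth[of j] bounded_linear_vec_nth[of i]] by (simp add: o_def)

lemma mpow_0[simp]: "mpow M 0 = mat 1"
  by (simp add: mpow_def)

lemma mpow_Suc: "mpow M (Suc k) = mpow M k ** M"
  by (simp add: mpow_def)

lemma mpow_comm: "M ** mpow M k = mpow M k ** (M::real^'n^'n)"
  by (induction k) (simp_all add: mpow_Suc matrix_mul_assoc)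

lemma mpow_scale: "mpow (t *\<^sub>R M) k = (t ^ k) *\<^sub>R mpow (M::real^'n^'n) k"
  by (induction k) (simp_all add: mpow_Suc mm_scale_l mm_scale_r)

lemma mpow_zero: "mpow (0::real^'n^'n) k = (if k = 0 then mat 1 else 0)"
  by (induction k) (simp_all add: mpow_Suc)

lemma summable_mexp: "summable (\<lambda>k. (1 / fact k) *\<^sub>R mpow (M::real^'n^'n) k)"
proof -
  obtain K where K: "K > 0" "\<And>a b. norm ((a::real^'n^'n) ** (b::real^'n^'n)) \<le> norm a * norm b * K"
    using bounded_bilinear.pos_bounded[OF bb_mm] by blast
  have nb: "norm (mpow M k) \<le> norm (mat 1 :: real^'n^'n) * (norm M * K) ^ k" for k
  proof (induction k)
    case 0 then show ?case by simp
  next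
    case (Suc k)
    have "norm (mpow M (Suc k)) \<le> norm (mpow M k) * norm M * K"
      unfolding mpow_Suc by (rule K(2))
    also have "\<dots> \<le> norm (mat 1 :: real^'n^'n) * (norm M * K) ^ k * norm M * K"
      using Suc K(1) by (simp add: mult_right_mono)
    finally show ?case by (simp add: algebra_simps)
  qed
  have s: "summable (\<lambda>k. norm (mat 1 :: real^'n^'n) * (inverse (fact k) * (norm M * K) ^ k))"
    by (intro summable_mult summable_exp)
  show ?thesis
  proof (rule summable_comparison_test[OF _ s], intro exI allI impI)
    fix k :: nat
    have "norm ((1 / fact k) *\<^sub>R mpow M k) = inverse (fact k) * norm (mpow M k)"
      by (simp add: divide_inverse)
    also have "\<dots> \<le> inverse (fact k) * (norm (mat 1 :: real^'n^'n) * (norm M * K) ^ k)"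
      by (rule mult_left_mono[OF nb]) simp
    finally show "norm ((1 / fact k) *\<^sub>R mpow M k) \<le> norm (mat 1 :: real^'n^'n) * (inverse (fact k) * (norm M * K) ^ k)"
      by (simp add: algebra_simps)
  qed
qed

lemma mexp_zero: "mexp (0::real^'n^'n) = mat 1"
proof -
  have "mexp (0::real^'n^'n) = (\<Sum>k\<in>{0}. (1 / fact k) *\<^sub>R mpow (0::real^'n^'n) k)"
    unfolding mexp_def by (rule suminf_finite) (auto simp: mpow_zero)
  then show ?thesis by simp
qed

lemma mexp_comm: "F ** mexp M = mexp M ** (F::real^'n^'n)" if "F ** M = M ** F"
proof -
  have pc: "F ** mpow M k = mpow M k ** F" for k
    by (induction k) (simp_all add: mpow_Suc matrix_mul_assoc that, metis matrix_mul_assoc that)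
  have "F ** mexp M = (\<Sum>k. F ** ((1 / fact k) *\<^sub>R mpow M k))"
    unfolding mexp_def
    by (rule bounded_linear.suminf[OF bounded_bilinear.bounded_linear_right[OF bb_mm] summable_mexp])
  also have "\<dots> = (\<Sum>k. ((1 / fact k) *\<^sub>R mpow M k) ** F)"
    by (simp add: mm_scale_l mm_scale_r pc)
  also have "\<dots> = mexp M ** F"
    unfolding mexp_def
    by (rule bounded_linear.suminf[OF bounded_bilinear.bounded_linear_left[OF bb_mm] summable_mexp, symmetric])
  finally show ?thesis .
qed

lemma mexp_entry: "mexp (M::real^'n^'n) $ i $ j = (\<Sum>k. (1 / fact k) * (mpow M k $ i $ j))"
  unfolding mexp_def
  using bounded_linear.suminf[OF bl_entry[of i j] summable_mexp[of M]] by simp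

lemma summable_mexp_entry: "summable (\<lambda>k. (1 / fact k) * (mpow (M::real^'n^'n) k $ i $ j))"
  using summable_vec_nth[OF summable_vec_nth[OF summable_mexp[of M]], of i j] by simp

lemma mexp_deriv:
  "((\<lambda>t. mexp (t *\<^sub>R F)) has_vector_derivative (mexp (t *\<^sub>R F) ** (F::real^'n^'n))) (at t within S)"
proof (rule mat_deriv_entries)
  fix i j
  define c where "c k = mpow F k $ i $ j / fact k" for k
  have e: "mexp (s *\<^sub>R F) $ i $ j = (\<Sum>k. c k * s ^ k)" for s
    unfolding mexp_entry c_def mpow_scale by (simp add: field_simps)
  have sm: "summable (\<lambda>k. c k * y ^ k)" for y
    using summable_mexp_entry[of "y *\<^sub>R F" i j] unfolding mpow_scale c_def
    by (simp add: field_simps)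
  have d: "((\<lambda>s. \<Sum>k. c k * s ^ k) has_field_derivative (\<Sum>k. diffs c k * t ^ k)) (at t)"
    by (rule termdiffs_strong_converges_everywhere[OF sm])
  have "(\<Sum>k. diffs c k * t ^ k) = (\<Sum>k. (((1 / fact k) *\<^sub>R mpow (t *\<^sub>R F) k) ** F) $ i $ j)"
  proof (rule arg_cong[where f=suminf], rule ext)
    fix k
    have "diffs c k * t ^ k = (real (Suc k) / fact (Suc k)) * t ^ k * (mpow F (Suc k) $ i $ j)"
      by (simp add: diffs_def c_def)
    also have "real (Suc k) / fact (Suc k) = (1 / fact k :: real)"
      by (simp add: fact_Suc del: of_nat_Suc)
    also have "(1 / fact k) * t ^ k * (mpow F (Suc k) $ i $ j) = (1 / fact k) * t ^ k * ((mpow F k ** F) $ i $ j)"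
      by (simp add: mpow_Suc)
    also have "\<dots> = (((1 / fact k) *\<^sub>R mpow (t *\<^sub>R F) k) ** F) $ i $ j"
      by (simp add: mpow_scale mm_scale_l)
    finally show "diffs c k * t ^ k = (((1 / fact k) *\<^sub>R mpow (t *\<^sub>R F) k) ** F) $ i $ j" .
  qed
  also have "\<dots> = (mexp (t *\<^sub>R F) ** F) $ i $ j"
  proof -
    have bl: "bounded_linear (\<lambda>X::real^'n^'n. (X ** F) $ i $ j)"
      using bounded_linear_compose[OF bl_entry[of i j] bounded_bilinear.bounded_linear_left[OF bb_mm, of F]]
      by (simp add: o_def)
    show ?thesis unfolding mexp_def
      using bounded_linear.suminf[OF bl summable_mexp] by simp
  qed
  finally have "((\<lambda>s. mexp (s *\<^sub>R F) $ i $ j) has_field_derivative (mexp (t *\<^sub>R F) ** F) $ i $ j) (at t)"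
    using d unfolding e by simp
  then show "((\<lambda>s. mexp (s *\<^sub>R F) $ i $ j) has_field_derivative (mexp (t *\<^sub>R F) ** F) $ i $ j) (at t within S)"
    by (rule has_field_derivative_at_within)
qed

lemma vd_zero_const:
  fixes f :: "real \<Rightarrow> 'a::real_normed_vector"
  assumes "convex S" "\<And>x. x \<in> S \<Longrightarrow> (f has_vector_derivative 0) (at x within S)" "a \<in> S" "b \<in> S"
  shows "f a = f b"
proof -
  have "\<exists>c. \<forall>x\<in>S. f x = c"
    by (rule has_derivative_zero_constant[OF assms(1)])
       (use assms(2) in \<open>auto simp: has_vector_derivative_def\<close>)
  then show ?thesis using assms(3,4) by auto
qed

lemma mexp_comm_scale: "F ** mexp (s *\<^sub>R F) = mexp (s *\<^sub>R F) ** (F::real^'n^'n)"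
  by (rule mexp_comm) (simp add: mm_scale_l mm_scale_r)

lemma mexp_deriv_rev:
  "((\<lambda>t. mexp ((a - t) *\<^sub>R F)) has_vector_derivative - (mexp ((a - t) *\<^sub>R F) ** (F::real^'n^'n))) (at t within S)"
proof -
  have f: "((\<lambda>t. a - t) has_vector_derivative (-1)) (at t within S)"
    by (auto intro!: derivative_eq_intros)
  have "(((\<lambda>u. mexp (u *\<^sub>R F)) \<circ> (\<lambda>t. a - t)) has_vector_derivative ((-1) *\<^sub>R (mexp ((a - t) *\<^sub>R F) ** F))) (at t within S)"
    by (rule vector_diff_chain_within[OF f mexp_deriv])
  then show ?thesis by (simp add: o_def)
qed

lemma mexp_inv: "mexp (s *\<^sub>R F) ** mexp ((- s) *\<^sub>R F) = mat (1::real)" for F :: "real^'n^'n"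
proof -
  let ?G = "\<lambda>s. mexp (s *\<^sub>R F) ** mexp ((0 - s) *\<^sub>R F)"
  have "?G s = ?G 0"
  proof (rule vd_zero_const[of UNIV])
    fix x :: real
    have "(?G has_vector_derivative
        (mexp (x *\<^sub>R F) ** (- (mexp ((0 - x) *\<^sub>R F) ** F)) + (mexp (x *\<^sub>R F) ** F) ** mexp ((0 - x) *\<^sub>R F)))
        (at x within UNIV)"
      by (rule bounded_bilinear.has_vector_derivative[OF bb_mm mexp_deriv mexp_deriv_rev])
    moreover have "mexp (x *\<^sub>R F) ** (- (mexp ((0 - x) *\<^sub>R F) ** F)) + (mexp (x *\<^sub>R F) ** F) ** mexp ((0 - x) *\<^sub>R F) = 0"
      using mexp_comm_scale[of F "0 - x"]
      by (simp add: bounded_bilinear.minus_right[OF bb_mm] matrix_mul_assoc[symmetric])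
    ultimately show "(?G has_vector_derivative 0) (at x within UNIV)" by simp
  qed auto
  then show ?thesis by (simp add: mexp_zero)
qed




lemma det_differentiable:
  fixes N :: "real \<Rightarrow> real^'n^'n"
  assumes "\<And>i j. (\<lambda>t. N t $ i $ j) differentiable (at t within S)"
  shows "(\<lambda>t. det (N t)) differentiable (at t within S)"
proof -
  have p: "(\<lambda>t. \<Prod>i\<in>UNIV. N t $ i $ p i) differentiable (at t within S)" for p :: "'n \<Rightarrow> 'n"
  proof -
    have "\<forall>i. \<exists>D. ((\<lambda>t. N t $ i $ p i) has_derivative D) (at t within S)"
      using assms unfolding differentiable_def by blast
    then have "\<exists>D. \<forall>i. ((\<lambda>t. N t $ i $ p i) has_derivative D i) (at t within S)"
      by (rule choice)
    then obtain D where D: "\<And>i. ((\<lambda>t. N t $ i $ p i) has_derivative D i) (at t within S)"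
      by blast
    show ?thesis unfolding differentiable_def
      using has_derivative_prod[of UNIV "\<lambda>i t. N t $ i $ p i" D t S] D by blast
  qed
  show ?thesis unfolding det_def
    apply (rule differentiable_sum)
     apply simp
    apply (intro ballI differentiable_mult differentiable_const p)
    done
qed

lemma matrix_inv_props:
  fixes A :: "real^'n^'n"
  assumes "invertible A"
  shows "A ** matrix_inv A = mat 1" "matrix_inv A ** A = mat 1"
proof -
  have "\<exists>A'. A ** A' = mat 1 \<and> A' ** A = mat 1" using assms by (simp add: invertible_def)
  then have "A ** matrix_inv A = mat 1 \<and> matrix_inv A ** A = mat 1"
    unfolding matrix_inv_def by (rule someI_ex)
  then show "A ** matrix_inv A = mat 1" "matrix_inv A ** A = mat 1" by auto
qed

lemma matrix_inv_entry:
  fixes A :: "real^'n^'n"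
  assumes "invertible A"
  shows "matrix_inv A $ k $ j = det (\<chi> i l. if l = k then axis j 1 $ i else A $ i $ l) / det A"
proof -
  have d: "det A \<noteq> 0" using assms by (simp add: invertible_det_nz)
  let ?x = "matrix_inv A *v axis j 1"
  have "A *v ?x = axis j 1"
    by (simp add: matrix_vector_mul_assoc matrix_inv_props[OF assms])
  then have "?x = (\<chi> k. det(\<chi> i l. if l = k then axis j 1 $ i else A $ i $ l) / det A)"
    by (rule iffD1[OF cramer[OF d]])
  then have "?x $ k = det (\<chi> i l. if l = k then axis j 1 $ i else A $ i $ l) / det A" by simp
  moreover have "?x $ k = matrix_inv A $ k $ j"
    by (simp add: matrix_vector_mult_basis column_def)
  ultimately show ?thesis by simp
qed

lemma inv_differentiable:
  fixes L :: "real \<Rightarrow> real^'n^'n"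
  assumes inv: "\<And>t. invertible (L t)" and d: "\<And>i j. (\<lambda>t. L t $ i $ j) differentiable (at t within S)"
  shows "(\<lambda>t. matrix_inv (L t)) differentiable (at t within S)"
proof (rule mat_differentiable_entries)
  fix k j
  have e: "(\<lambda>s. matrix_inv (L s) $ k $ j) =
     (\<lambda>s. det (\<chi> i l. if l = k then axis j 1 $ i else L s $ i $ l) / det (L s))"
    using matrix_inv_entry[OF inv] by (intro ext) blast
  have n: "(\<lambda>s. (\<chi> i l. if l = k then axis j 1 $ i else L s $ i $ l) $ i' $ l') differentiable (at t within S)" for i' l'
    using d[of i' l'] by (cases "l' = k") simp_all
  show "(\<lambda>s. matrix_inv (L s) $ k $ j) differentiable (at t within S)"
    unfolding e
    apply (rule differentiable_divide)
      apply (rule det_differentiable, rule n)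
     apply (rule det_differentiable, rule d)
    using inv by (simp add: invertible_det_nz)
qed



lemma factor_M:
  fixes Shat :: "real^'n^'m" and F :: "real^'n^'n" and \<Lambda> :: "(real^'n) set"
  assumes Lambda_sub: "subspace \<Lambda>"
    and Lambda_codim: "dim \<Lambda> + CARD('m) = CARD('n)"
    and Lambda_inv: "\<And>x. x \<in> \<Lambda> \<Longrightarrow> F *v x \<in> \<Lambda>"
    and Shat_rank: "rank Shat = CARD('m)"
    and Shat_ann: "\<And>x. x \<in> \<Lambda> \<Longrightarrow> Shat *v x = 0"
  shows "\<exists>M::real^'m^'m. Shat ** F = M ** Shat"
proof -
  let ?ker = "{x. Shat *v x = 0}"
  have kerdef: "?ker = ((*v) Shat) -` {0}" by auto
  have ker_oc: "?ker = (range ((*v) (transpose Shat)))\<^sup>\<bottom>"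
    unfolding kerdef
    using ker_orthogonal_comp_adjoint[of "(*v) Shat"] adjoint_matrix[of Shat]
    by (simp add: matrix_vector_mul_linear)
  have sub_r: "subspace (range ((*v) (transpose Shat)))"
    by (rule linear_subspace_image[OF matrix_vector_mul_linear subspace_UNIV])
  have "dim {y \<in> UNIV. \<forall>x \<in> range ((*v) (transpose Shat)). orthogonal x y} + dim (range ((*v) (transpose Shat))) = dim (UNIV :: (real^'n) set)"
    by (rule dim_subspace_orthogonal_to_vectors[OF sub_r subspace_UNIV]) simp
  moreover have "dim (range ((*v) (transpose Shat))) = CARD('m)"
    using rank_dim_range[of "transpose Shat"] rank_transpose[of Shat] Shat_rank by simp
  moreover have "{y \<in> UNIV. \<forall>x \<in> range ((*v) (transpose Shat)). orthogonal x y} = ?ker"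
    unfolding ker_oc orthogonal_comp_def by simp
  ultimately have dker: "dim ?ker + CARD('m) = CARD('n)" by simp
  have sker: "subspace ?ker"
    by (auto simp: subspace_def matrix_vector_right_distrib matrix_vector_mult_scaleR)
  have eq: "\<Lambda> = ?ker"
    by (rule subspace_dim_equal[OF Lambda_sub sker]) (use Shat_ann dker Lambda_codim in auto)
  have "surj ((*v) Shat)" using Shat_rank full_rank_surjective by blast
  then obtain R :: "real^'m^'n" where R: "Shat ** R = mat 1"
    using matrix_right_invertible_surjective by blast
  have "Shat ** F = (Shat ** F ** R) ** Shat"
  proof (subst matrix_eq, intro allI)
    fix x
    let ?v = "x - R *v (Shat *v x)"
    have "Shat *v (R *v (Shat *v x)) = Shat *v x"
      by (simp add: matrix_vector_mul_assoc matrix_mul_assoc R)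
    then have "Shat *v ?v = 0"
      by (simp add: matrix_vector_mult_diff_distrib)
    then have "?v \<in> \<Lambda>" using eq by simp
    then have "Shat *v (F *v ?v) = 0" using Lambda_inv Shat_ann by blast
    then show "(Shat ** F) *v x = (Shat ** F ** R ** Shat) *v x"
      by (simp add: matrix_vector_mult_diff_distrib matrix_vector_mul_assoc matrix_mul_assoc)
  qed
  then show ?thesis by blast
qed

lemma per_int:
  assumes "\<And>t. f (t + p) = f t"
  shows "f (t + real_of_int k * p) = f t"
proof -
  have n: "f (s + real n * p) = f s" for s n
  proof (induction n)
    case (Suc n)
    have "f (s + real (Suc n) * p) = f ((s + real n * p) + p)" by (simp add: algebra_simps)
    also have "\<dots> = f (s + real n * p)" by (rule assms)
    also have "\<dots> = f s" by (rule Suc)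
    finally show ?case .
  qed simp
  show ?thesis
  proof (cases "k \<ge> 0")
    case True
    then show ?thesis using n[of t "nat k"] by simp
  next
    case False
    have "f (t + real_of_int k * p) = f ((t + real_of_int k * p) + real (nat (-k)) * p)"
      using n by simp
    also have "(t + real_of_int k * p) + real (nat (-k)) * p = t" using False by simp
    finally show ?thesis .
  qed
qed

lemma per_reduce:
  fixes p :: real
  assumes "p > 0"
  obtains k :: int where "0 \<le> t - real_of_int k * p" "t - real_of_int k * p < p"
proof -
  let ?k = "\<lfloor>t / p\<rfloor>"
  have a: "real_of_int ?k \<le> t / p" by linarith
  have b: "t / p < real_of_int ?k + 1" by linarith
  have c: "real_of_int ?k * p \<le> t" using a assms by (metis pos_le_divide_eq)
  have "t < (real_of_int ?k + 1) * p" using b assms by (metis pos_divide_less_eq)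
  then have d: "t < real_of_int ?k * p + p" by (simp add: distrib_right)
  show ?thesis by (rule that[of ?k]) (use c d in linarith)+
qed



theorem proposition2:
  fixes A :: "real \<Rightarrow> real^'n^'n"
    and B :: "real \<Rightarrow> real^'m^'n"
    and K :: "real \<Rightarrow> real^'n^'m"
    and \<Delta> :: "real^'n \<Rightarrow> real \<Rightarrow> real^'m"
    and T :: real and c :: nat
    and Psi :: "real \<Rightarrow> real \<Rightarrow> real^'n^'n"
    and L :: "real \<Rightarrow> real^'n^'n" and F :: "real^'n^'n"
    and \<Lambda> :: "(real^'n) set" and Shat :: "real^'n^'m"
    and S :: "real \<Rightarrow> real^'n^'m"
    and y :: "real \<Rightarrow> real^'n" and u :: "real \<Rightarrow> real^'m" and t0 :: real
  assumes T_pos: "T > 0"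
    and A_cont: "continuous_on UNIV A" and A_bdd: "bounded (range A)"
    and A_per: "\<And>t. A (t + T) = A t"
    and B_cont: "continuous_on UNIV B" and B_bdd: "bounded (range B)"
    and B_per: "\<And>t. B (t + T) = B t"
    and Delta_bdd: "bounded (range (\<lambda>(z, t). \<Delta> z t))"
    and K_cont: "continuous_on UNIV K" and K_per: "\<And>t. K (t + T) = K t"
    and stable: "exp_stable (\<lambda>t. A t + B t ** K t)"
    and Psi: "state_transition (\<lambda>t. A t + B t ** K t) Psi"
    and c_pos: "c > 0"
    and floquet: "\<And>t. Psi t 0 = L t ** mexp (t *\<^sub>R F)"
    and L_C1: "\<exists>L'. (\<forall>t. (L has_vector_derivative L' t) (at t)) \<and> continuous_on UNIV L'"
    and L_inv: "\<And>t. invertible (L t)"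
    and L_per: "\<And>t. L (t + real c * T) = L t"
    and Lambda_sub: "subspace \<Lambda>"
    and Lambda_codim: "dim \<Lambda> + CARD('m) = CARD('n)"
    and Lambda_inv: "\<And>x. x \<in> \<Lambda> \<Longrightarrow> F *v x \<in> \<Lambda>"
    and Shat_rank: "rank Shat = CARD('m)"
    and Shat_ann: "\<And>x. x \<in> \<Lambda> \<Longrightarrow> Shat *v x = 0"
    and S_def: "\<And>t. S t = Shat ** matrix_inv (L t)"
    and SB_rank: "\<And>t. 0 \<le> t \<Longrightarrow> t < real c * T \<Longrightarrow> rank (S t ** B t) = CARD('m)"
    and motion: "\<And>t. t \<ge> t0 \<Longrightarrow>
        (y has_vector_derivative (A t *v y t + B t *v (u t + \<Delta> (y t) t))) (at t within {t0..})"
  shows "(\<forall>t\<ge>t0. S t *v y t = 0) \<longleftrightarrow>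
         (S t0 *v y t0 = 0 \<and> (\<forall>t\<ge>t0. u t = K t *v y t - \<Delta> (y t) t))"
proof -
  define Acl where "Acl t = A t + B t ** K t" for t
  define Linv where "Linv = (\<lambda>t. matrix_inv (L t))"
  define w where "w t = u t + \<Delta> (y t) t - K t *v y t" for t
  obtain L' where L': "\<And>t. (L has_vector_derivative L' t) (at t)" using L_C1 by blast
  obtain M :: "real^'m^'m" where M: "Shat ** F = M ** Shat"
    using factor_M[OF Lambda_sub Lambda_codim Lambda_inv Shat_rank Shat_ann] by blast
  have P': "((\<lambda>t. Psi t 0) has_vector_derivative (Acl t ** Psi t 0)) (at t)" for t
    using Psi unfolding state_transition_def Acl_def by blast
  have Linv1: "L t ** Linv t = mat 1" and Linv2: "Linv t ** L t = mat 1" for t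
    using matrix_inv_props[OF L_inv] unfolding Linv_def by auto
  have cancel: "X = Y" if "X ** mexp (t *\<^sub>R F) = Y ** mexp (t *\<^sub>R F)" for X Y :: "real^'n^'n" and t
    by (metis that matrix_mul_assoc matrix_mul_rid mexp_inv)
  have Lder: "L' t = Acl t ** L t - L t ** F" for t
  proof -
    let ?E = "\<lambda>t. mexp (t *\<^sub>R F)"
    have d1: "((\<lambda>t. L t ** ?E t) has_vector_derivative (L t ** (?E t ** F) + L' t ** ?E t)) (at t)"
      by (rule bounded_bilinear.has_vector_derivative[OF bb_mm L' mexp_deriv])
    have "(\<lambda>t. L t ** ?E t) = (\<lambda>t. Psi t 0)" using floquet by auto
    then have d2: "((\<lambda>t. L t ** ?E t) has_vector_derivative (Acl t ** (L t ** ?E t))) (at t)"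
      using P'[of t] floquet[of t] by simp
    have eq: "L t ** (?E t ** F) + L' t ** ?E t = Acl t ** (L t ** ?E t)"
      using vector_derivative_unique_at[OF d1 d2] .
    have "L t ** (?E t ** F) = (L t ** F) ** ?E t"
      by (metis mexp_comm_scale matrix_mul_assoc)
    with eq have "(L t ** F + L' t) ** ?E t = (Acl t ** L t) ** ?E t"
      by (simp add: mm_add_r matrix_mul_assoc)
    then have "L t ** F + L' t = Acl t ** L t" by (rule cancel)
    then show ?thesis by (metis add_diff_cancel_left')
  qed
  have Linv_der: "(Linv has_vector_derivative (F ** Linv t - Linv t ** Acl t)) (at t)" for t
  proof -
    have ent: "(\<lambda>s. L s $ i $ j) differentiable (at t)" for i j
      using bounded_linear.has_vector_derivative[OF bl_entry[of i j] L'[of t]]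
      by (rule differentiableI_vector)
    have "Linv differentiable (at t)"
      unfolding Linv_def by (rule inv_differentiable[OF L_inv ent])
    then obtain D where D: "(Linv has_vector_derivative D) (at t)"
      using vector_derivative_works by blast
    have d1: "((\<lambda>s. L s ** Linv s) has_vector_derivative (L t ** D + L' t ** Linv t)) (at t)"
      by (rule bounded_bilinear.has_vector_derivative[OF bb_mm L' D])
    have "(\<lambda>s. L s ** Linv s) = (\<lambda>s. mat 1)" by (simp add: Linv1)
    then have d2: "((\<lambda>s. L s ** Linv s) has_vector_derivative 0) (at t)" by simp
    have "L t ** D + L' t ** Linv t = 0" using vector_derivative_unique_at[OF d1 d2] .
    then have LD: "L t ** D = - (L' t ** Linv t)" by (simp add: eq_neg_iff_add_eq_0)
    have "D = Linv t ** (L t ** D)" by (simp add: matrix_mul_assoc Linv2)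
    also have "\<dots> = - (Linv t ** ((Acl t ** L t - L t ** F) ** Linv t))"
      by (simp add: LD Lder bounded_bilinear.minus_right[OF bb_mm])
    also have "(Acl t ** L t - L t ** F) ** Linv t = Acl t - L t ** (F ** Linv t)"
      by (simp add: bounded_bilinear.diff_left[OF bb_mm] matrix_mul_assoc[symmetric] Linv1)
    also have "Linv t ** (Acl t - L t ** (F ** Linv t)) = Linv t ** Acl t - F ** Linv t"
      by (simp add: bounded_bilinear.diff_right[OF bb_mm] matrix_mul_assoc Linv2)
    finally have "D = F ** Linv t - Linv t ** Acl t" by simp
    then show ?thesis using D by simp
  qed
  have Sfun: "S = (\<lambda>t. Shat ** Linv t)" using S_def unfolding Linv_def by auto
  have S_der: "(S has_vector_derivative (M ** S t - S t ** Acl t)) (at t)" for t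
  proof -
    have "((\<lambda>t. Shat ** Linv t) has_vector_derivative (Shat ** (F ** Linv t - Linv t ** Acl t))) (at t)"
      by (rule bounded_linear.has_vector_derivative[OF bounded_bilinear.bounded_linear_right[OF bb_mm] Linv_der])
    moreover have "Shat ** (F ** Linv t - Linv t ** Acl t) = M ** S t - S t ** Acl t"
      by (simp add: Sfun bounded_bilinear.diff_right[OF bb_mm] matrix_mul_assoc M)
    ultimately show ?thesis using Sfun by simp
  qed
  have z_der: "((\<lambda>t. S t *v y t) has_vector_derivative (M *v (S t *v y t) + (S t ** B t) *v w t)) (at t within {t0..})"
    if "t \<ge> t0" for t
  proof -
    have "((\<lambda>t. S t *v y t) has_vector_derivative
        (S t *v (A t *v y t + B t *v (u t + \<Delta> (y t) t)) + (M ** S t - S t ** Acl t) *v y t)) (at t within {t0..})"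
      by (rule bounded_bilinear.has_vector_derivative[OF bb_mv has_vector_derivative_at_within[OF S_der] motion[OF that]])
    moreover have "S t *v (A t *v y t + B t *v (u t + \<Delta> (y t) t)) + (M ** S t - S t ** Acl t) *v y t
        = M *v (S t *v y t) + (S t ** B t) *v w t"
      by (simp add: Acl_def w_def algebra_simps matrix_vector_mul_assoc[symmetric])
    ultimately show ?thesis by simp
  qed
  have p_pos: "real c * T > 0" using c_pos T_pos by simp
  have SBinj: "inj ((*v) (S t ** B t))" for t
  proof -
    obtain k where k: "0 \<le> t - real_of_int k * (real c * T)" "t - real_of_int k * (real c * T) < real c * T"
      using per_reduce[OF p_pos] by blast
    let ?t = "t - real_of_int k * (real c * T)"
    have "L t = L ?t"
      using per_int[of L "real c * T" ?t k] L_per by simp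
    moreover have "B t = B ?t"
      using per_int[of B T ?t "k * int c"] B_per by (simp add: algebra_simps)
    ultimately have "S t ** B t = S ?t ** B ?t" by (simp add: S_def)
    then have "rank (S t ** B t) = CARD('m)" using SB_rank[OF k] by simp
    then show ?thesis by (simp add: full_rank_injective)
  qed
  have nb: "at t within {t0..} \<noteq> bot" if "t \<ge> t0" for t
  proof -
    have "t islimpt {t0..}"
      unfolding islimpt_approachable_real
    proof (intro allI impI)
      fix e :: real assume "e > 0"
      then show "\<exists>x'\<in>{t0..}. x' \<noteq> t \<and> \<bar>x' - t\<bar> < e"
        using that by (intro bexI[of _ "t + e / 2"]) auto
    qed
    then show ?thesis using trivial_limit_within by blast
  qed
  show ?thesis
  proof
    assume H: "\<forall>t\<ge>t0. S t *v y t = 0"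
    have "u t = K t *v y t - \<Delta> (y t) t" if t: "t \<ge> t0" for t
    proof -
      have "((\<lambda>t. S t *v y t) has_vector_derivative 0) (at t within {t0..})"
        by (rule has_vector_derivative_transform[of t "{t0..}" _ "\<lambda>_. 0"]) (use H t in auto)
      then have "M *v (S t *v y t) + (S t ** B t) *v w t = 0"
        using vector_derivative_unique_within[OF nb[OF t] z_der[OF t]] by simp
      then have "(S t ** B t) *v w t = (S t ** B t) *v 0" using H t by simp
      then have "w t = 0" by (rule injD[OF SBinj[of t]])
      then show ?thesis by (simp add: w_def algebra_simps)
    qed
    then show "S t0 *v y t0 = 0 \<and> (\<forall>t\<ge>t0. u t = K t *v y t - \<Delta> (y t) t)" using H by auto
  next
    assume H: "S t0 *v y t0 = 0 \<and> (\<forall>t\<ge>t0. u t = K t *v y t - \<Delta> (y t) t)"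
    have w0: "w t = 0" if "t \<ge> t0" for t using H that by (simp add: w_def)
    let ?h = "\<lambda>t. mexp ((t0 - t) *\<^sub>R M) *v (S t *v y t)"
    have hc: "?h t = ?h t0" if t: "t \<ge> t0" for t
    proof (rule vd_zero_const[of "{t0..}"])
      fix x assume x: "x \<in> {t0..}"
      have "(?h has_vector_derivative (mexp ((t0 - x) *\<^sub>R M) *v (M *v (S x *v y x) + (S x ** B x) *v w x)
            + (- (mexp ((t0 - x) *\<^sub>R M) ** M)) *v (S x *v y x))) (at x within {t0..})"
        by (rule bounded_bilinear.has_vector_derivative[OF bb_mv mexp_deriv_rev z_der]) (use x in simp)
      moreover have "mexp ((t0 - x) *\<^sub>R M) *v (M *v (S x *v y x) + (S x ** B x) *v w x)
            + (- (mexp ((t0 - x) *\<^sub>R M) ** M)) *v (S x *v y x) = 0"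
        using w0[of x] x by (simp add: matrix_vector_mul_assoc matrix_vector_right_distrib
            bounded_bilinear.minus_left[OF bb_mv] bounded_bilinear.minus_left[OF bb_mm] matrix_mul_assoc)
      ultimately show "(?h has_vector_derivative 0) (at x within {t0..})" by simp
    qed (use t in \<open>auto simp: convex_real_interval\<close>)
    show "\<forall>t\<ge>t0. S t *v y t = 0"
    proof (intro allI impI)
      fix t assume t: "t \<ge> t0"
      have "?h t = 0" using hc[OF t] H by (simp add: mexp_zero)
      have "S t *v y t = (mexp ((t - t0) *\<^sub>R M) ** mexp ((- (t - t0)) *\<^sub>R M)) *v (S t *v y t)"
        by (simp only: mexp_inv matrix_vector_mul_lid)
      also have "\<dots> = mexp ((t - t0) *\<^sub>R M) *v ?h t"
        by (simp add: matrix_vector_mul_assoc matrix_mul_assoc)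
      also have "\<dots> = 0" using \<open>?h t = 0\<close> by simp
      finally show "S t *v y t = 0" .
    qed
  qed
qed

end
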